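(* Let $\mathbf a=\{a_j\}_{j\ge1}$ and $\mathbf b=\{b_j\}_{j\ge1}$ be positive sequences satisfying $0<a_1\le a_2\le\cdots$ and $\inf_j b_j>0$, and fix $\omega\in(0,1)$. Then for all $\varepsilon\in(0,1)$ and $d\in\mathbb N$, $$n(\varepsilon,\mathrm{APP}_d)=n\Big(\Big(\frac{\ln\varepsilon^{-2}}{\ln\omega^{-1}}+1\Big)^{-1/2},I_d\Big)\quad\text{and}\quad n(\varepsilon,I_d)=n\big(\omega^{(\varepsilon^{-2}-1)/2},\mathrm{APP}_d\big).$$
   Context: For $f\in L_2([0,1]^d)$, $\hat f(\mathbf k)=\int_{[0,1]^d}f(\mathbf x)e^{-2\pi i\mathbf k\cdot\mathbf x}d\mathbf x$. $W_2^{\mathbf a,\mathbf b}([0,1]^d)$ is the Hilbert space of $f\in L_2([0,1]^d)$ with norm $\|f\|^2=\sum_{\mathbf k\in\mathbb Z^d}(1+\sum_{j=1}^d a_j|k_j|^{2b_j})|\hat f(\mathbf k)|^2<\infty$, and $I_d:W_2^{\mathbf a,\mathbf b}([0,1]^d)\to L_2([0,1]^d)$ is the identity embedding. With $\omega_{\mathbf k}=\omega^{\sum_{j=1}^d a_j|k_j|^{2b_j}}$, the analytic Korobov space $H(K_{d,\mathbf a,2\mathbf b})$ is the reproducing kernel Hilbert space with kernel $K(\mathbf x,\mathbf y)=\sum_{\mathbf k\in\mathbb Z^d}\omega_{\mathbf k}e^{2\pi i\mathbf k\cdot(\mathbf x-\mathbf y)}$, i.e. functions with norm $\|f\|^2=\sum_{\mathbf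 k}|\hat f(\mathbf k)|^2\omega_{\mathbf k}^{-1}<\infty$; $\mathrm{APP}_d:H(K_{d,\mathbf a,2\mathbf b})\to L_2([0,1]^d)$, $\mathrm{APP}_d f=f$. Approximation numbers: $a_n(T)=\inf\{\|T-A\|:\mathrm{rank}\,A<n\}$. For $S_d\in\{I_d,\mathrm{APP}_d\}$ the information complexity (minimal number of continuous linear functionals needed for worst-case error $\le\varepsilon$ on the unit ball) is $n(\varepsilon,S_d)=\min\{n\ge0: a_{n+1}(S_d)\le\varepsilon\}$. *)

theory Defs
  imports "HOL-Analysis.Analysis"
begin

text \<open>Functions in L_2([0,1]^d) are represented by their Fourier coefficient
  families (Parseval: L_2([0,1]^d) is isometric to l_2(Z^d)).\<close>

type_synonym idx = "nat \<Rightarrow> int"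
type_synonym coef = "idx \<Rightarrow> complex"

definition Zd :: "nat \<Rightarrow> idx set" where
  "Zd d = {k. \<forall>j. (j = 0 \<or> d < j) \<longrightarrow> k j = 0}"

definition wl2 :: "(idx \<Rightarrow> real) \<Rightarrow> nat \<Rightarrow> coef set" where
  "wl2 w d = {f. (\<forall>k. k \<notin> Zd d \<longrightarrow> f k = 0) \<and>
                 (\<lambda>k. w k * (cmod (f k))\<^sup>2) summable_on Zd d}"

definition wnorm :: "(idx \<Rightarrow> real) \<Rightarrow> nat \<Rightarrow> coef \<Rightarrow> real" where
  "wnorm w d f = sqrt (\<Sum>\<^sub>\<infinity>k\<in>Zd d. w k * (cmod (f k))\<^sup>2)"

definition L2norm :: "nat \<Rightarrow> coef \<Rightarrow> real" where
  "L2norm d f = wnorm (\<lambda>_. 1) d f"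

definition fin_rank_op :: "(idx \<Rightarrow> real) \<Rightarrow> nat \<Rightarrow> nat \<Rightarrow> (coef \<Rightarrow> coef) \<Rightarrow> bool" where
  "fin_rank_op w d n A \<longleftrightarrow>
     (\<forall>f\<in>wl2 w d. A f \<in> wl2 (\<lambda>_. 1) d) \<and>
     (\<forall>f\<in>wl2 w d. \<forall>g\<in>wl2 w d. A (\<lambda>k. f k + g k) = (\<lambda>k. A f k + A g k)) \<and>
     (\<forall>c. \<forall>f\<in>wl2 w d. A (\<lambda>k. c * f k) = (\<lambda>k. c * A f k)) \<and>
     (\<exists>C. \<forall>f\<in>wl2 w d. L2norm d (A f) \<le> C * wnorm w d f) \<and>
     1 \<le> n \<and>
     (\<exists>g :: nat \<Rightarrow> coef. \<forall>f\<in>wl2 w d. \<exists>c :: nat \<Rightarrow> complex.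
          A f = (\<lambda>k. \<Sum>i<n - 1. c i * g i k))"

definition approx_num :: "(idx \<Rightarrow> real) \<Rightarrow> nat \<Rightarrow> nat \<Rightarrow> real" where
  "approx_num w d n =
     Inf ((\<lambda>A. Sup ((\<lambda>f. L2norm d (\<lambda>k. f k - A f k)) ` {f \<in> wl2 w d. wnorm w d f \<le> 1}))
          ` {A. fin_rank_op w d n A})"

definition info_compl :: "(idx \<Rightarrow> real) \<Rightarrow> nat \<Rightarrow> real \<Rightarrow> nat" where
  "info_compl w d \<epsilon> = (LEAST n. approx_num w d (n + 1) \<le> \<epsilon>)"

definition sob_weight :: "(nat \<Rightarrow> real) \<Rightarrow> (nat \<Rightarrow> real) \<Rightarrow> nat \<Rightarrow> idx \<Rightarrow> real" where
  "sob_weight a b d k = 1 + (\<Sum>j=1..d. a j * \<bar>real_of_int (k j)\<bar> powr (2 * b j))"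

definition omega_k :: "(nat \<Rightarrow> real) \<Rightarrow> (nat \<Rightarrow> real) \<Rightarrow> real \<Rightarrow> nat \<Rightarrow> idx \<Rightarrow> real" where
  "omega_k a b \<omega> d k = \<omega> powr (\<Sum>j=1..d. a j * \<bar>real_of_int (k j)\<bar> powr (2 * b j))"

definition kor_weight :: "(nat \<Rightarrow> real) \<Rightarrow> (nat \<Rightarrow> real) \<Rightarrow> real \<Rightarrow> nat \<Rightarrow> idx \<Rightarrow> real" where
  "kor_weight a b \<omega> d k = inverse (omega_k a b \<omega> d k)"

definition n_I :: "(nat \<Rightarrow> real) \<Rightarrow> (nat \<Rightarrow> real) \<Rightarrow> nat \<Rightarrow> real \<Rightarrow> nat" where
  "n_I a b d \<epsilon> = info_compl (sob_weight a b d) d \<epsilon>"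

definition n_APP :: "(nat \<Rightarrow> real) \<Rightarrow> (nat \<Rightarrow> real) \<Rightarrow> real \<Rightarrow> nat \<Rightarrow> real \<Rightarrow> nat" where
  "n_APP a b \<omega> d \<epsilon> = info_compl (kor_weight a b \<omega> d) d \<epsilon>"

end

theory Submission
  imports Defs "HOL-Library.Function_Algebras"
begin
definition sc :: "complex \<Rightarrow> ('a \<Rightarrow> complex) \<Rightarrow> ('a \<Rightarrow> complex)" where
  "sc c f = (\<lambda>k. c * f k)"

interpretation cv: vector_space "sc :: complex \<Rightarrow> ('a \<Rightarrow> complex) \<Rightarrow> _"
  by unfold_locales (auto simp: sc_def fun_eq_iff algebra_simps)

lemma sum_fun_apply': "(\<Sum>i\<in>F. (f i :: 'a \<Rightarrow> complex)) k = (\<Sum>i\<in>F. f i k)"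
  by (induction F rule: infinite_finite_induct) auto

definition ev :: "'a \<Rightarrow> 'a \<Rightarrow> complex" where "ev k = (\<lambda>j. if j = k then 1 else 0)"

lemma kernel_exists:
  fixes T :: "('a \<Rightarrow> complex) \<Rightarrow> ('a \<Rightarrow> complex)" and S :: "'a set" and g :: "nat \<Rightarrow> 'a \<Rightarrow> complex"
  assumes finS: "finite S" and nS: "n < card S"
    and add: "\<And>f h. (\<forall>k. k \<notin> S \<longrightarrow> f k = 0) \<Longrightarrow> (\<forall>k. k \<notin> S \<longrightarrow> h k = 0) \<Longrightarrow> T (f + h) = T f + T h"
    and hom: "\<And>c f. (\<forall>k. k \<notin> S \<longrightarrow> f k = 0) \<Longrightarrow> T (sc c f) = sc c (T f)"
    and rng: "\<And>f. (\<forall>k. k \<notin> S \<longrightarrow> f k = 0) \<Longrightarrow> \<exists>c. T f = (\<lambda>k. \<Sum>i<n. c i * g i k)"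
  shows "\<exists>f. (\<forall>k. k \<notin> S \<longrightarrow> f k = 0) \<and> f \<noteq> 0 \<and> T f = 0"
proof -
  let ?V = "{f. \<forall>k. k \<notin> S \<longrightarrow> f k = 0}"
  have lin: "T (\<Sum>k\<in>F. sc (c k) (ev k)) = (\<Sum>k\<in>F. sc (c k) (T (ev k)))" if "F \<subseteq> S" for F c
  proof -
    have "finite F" using that finS finite_subset by blast
    then show ?thesis using that
    proof (induction F rule: finite_induct)
      case empty
      have "T 0 = T (sc 0 0)" by (simp add: sc_def zero_fun_def)
      also have "\<dots> = 0" by (subst hom) (auto simp: sc_def fun_eq_iff)
      finally show ?case by (simp add: zero_fun_def)
    next
      case (insert x F)
      have inV: "(\<Sum>k\<in>F. sc (c k) (ev k)) \<in> ?V" using insert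
        by (auto simp: sum_fun_apply' sc_def ev_def intro!: sum.neutral)
      have "T (\<Sum>k\<in>insert x F. sc (c k) (ev k)) = T (sc (c x) (ev x) + (\<Sum>k\<in>F. sc (c k) (ev k)))"
        using insert by simp
      also have "\<dots> = T (sc (c x) (ev x)) + T (\<Sum>k\<in>F. sc (c k) (ev k))"
        using inV insert by (intro add) (auto simp: sc_def ev_def)
      also have "\<dots> = sc (c x) (T (ev x)) + (\<Sum>k\<in>F. sc (c k) (T (ev k)))"
        using insert by (subst hom) (auto simp: ev_def)
      finally show ?case by (simp only: sum.insert[OF insert(1,2)])
    qed
  qed
  have rngspan: "T f \<in> cv.span (g ` {..<n})" if fV: "\<forall>k. k \<notin> S \<longrightarrow> f k = 0" for f
  proof -
    obtain c where c: "T f = (\<lambda>k. \<Sum>i<n. c i * g i k)" using rng[OF fV] by (elim exE)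
    have "T f = (\<Sum>i<n. sc (c i) (g i))" by (simp add: c fun_eq_iff sum_fun_apply' sc_def)
    also have "\<dots> \<in> cv.span (g ` {..<n})"
      by (intro cv.span_sum cv.span_scale cv.span_base) auto
    finally show ?thesis .
  qed
  show ?thesis
  proof (cases "inj_on (\<lambda>k. T (ev k)) S")
    case False
    then obtain k j where kj: "k \<in> S" "j \<in> S" "k \<noteq> j" "T (ev k) = T (ev j)"
      unfolding inj_on_def by blast
    define f where "f = ev k + sc (-1) (ev j)"
    have "T f = T (ev k) + T (sc (-1) (ev j))" unfolding f_def
      using kj by (intro add) (auto simp: ev_def sc_def)
    also have "\<dots> = 0" using kj by (subst hom) (auto simp: ev_def sc_def fun_eq_iff)
    finally have "T f = 0" .
    moreover have "f k \<noteq> 0" using kj by (simp add: f_def ev_def sc_def)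
    moreover have "f \<in> ?V" using kj by (auto simp: f_def ev_def sc_def)
    ultimately show ?thesis by auto
  next
    case inj: True
    let ?E = "(\<lambda>k. T (ev k)) ` S"
    have "cv.dependent ?E"
    proof (rule ccontr)
      assume ind: "cv.independent ?E"
      have "?E \<subseteq> cv.span (g ` {..<n})" by (auto intro!: rngspan simp: ev_def)
      from cv.independent_span_bound[OF _ ind this] have "card ?E \<le> card (g ` {..<n})" by auto
      also have "\<dots> \<le> n" using card_image_le[of "{..<n}" g] by simp
      finally show False using card_image[OF inj] nS by simp
    qed
    then obtain u where u: "\<exists>v\<in>?E. u v \<noteq> 0" "(\<Sum>v\<in>?E. sc (u v) v) = 0"
      using cv.dependent_finite[of ?E] finS by auto
    define f where "f = (\<Sum>k\<in>S. sc (u (T (ev k))) (ev k))"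
    have "T f = (\<Sum>k\<in>S. sc (u (T (ev k))) (T (ev k)))" unfolding f_def by (rule lin) simp
    also have "\<dots> = (\<Sum>v\<in>?E. sc (u v) v)" by (subst sum.reindex[OF inj]) simp
    finally have T0: "T f = 0" using u by simp
    have fk: "f k = (if k \<in> S then u (T (ev k)) else 0)" for k
      unfolding f_def sum_fun_apply' sc_def ev_def using finS
      by (auto simp: if_distrib cong: if_cong)
    obtain k where "k \<in> S" "u (T (ev k)) \<noteq> 0" using u by auto
    then have "f \<noteq> 0" using fk[of k] by auto
    moreover have "\<forall>k. k \<notin> S \<longrightarrow> f k = 0" using fk by simp
    ultimately show ?thesis using T0 by blast
  qed
qed

lemma cmod_diff_sq: "(cmod (x - y))\<^sup>2 \<le> 2 * (cmod x)\<^sup>2 + 2 * (cmod y)\<^sup>2"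
proof -
  have "cmod (x - y) \<le> cmod x + cmod y" by (rule norm_triangle_ineq4)
  hence "(cmod (x - y))\<^sup>2 \<le> (cmod x + cmod y)\<^sup>2" by (simp add: power_mono)
  also have "\<dots> = 2 * (cmod x)\<^sup>2 + 2 * (cmod y)\<^sup>2 - (cmod x - cmod y)\<^sup>2"
    by (simp add: power2_eq_square algebra_simps)
  also have "\<dots> \<le> 2 * (cmod x)\<^sup>2 + 2 * (cmod y)\<^sup>2" by simp
  finally show ?thesis .
qed

lemma fin_supp_summable:
  assumes "finite F" "\<And>k. k \<notin> F \<Longrightarrow> h k = 0"
  shows "h summable_on A" "infsum h A = (\<Sum>k\<in>F \<inter> A. h k)"
proof -
  have "h summable_on A \<longleftrightarrow> h summable_on (F \<inter> A)"
    by (rule summable_on_cong_neutral) (use assms in auto)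
  thus "h summable_on A" using assms by simp
  have "infsum h A = infsum h (F \<inter> A)"
    by (rule infsum_cong_neutral) (use assms in auto)
  thus "infsum h A = (\<Sum>k\<in>F \<inter> A. h k)" using assms by simp
qed

lemma wl2_L2:
  assumes w1: "\<forall>k. 1 \<le> w k" and f: "f \<in> wl2 w d"
  shows "(\<lambda>k. (cmod (f k))\<^sup>2) summable_on Zd d"
    "(\<Sum>\<^sub>\<infinity>k\<in>Zd d. (cmod (f k))\<^sup>2) \<le> (\<Sum>\<^sub>\<infinity>k\<in>Zd d. w k * (cmod (f k))\<^sup>2)"
proof -
  have s: "(\<lambda>k. w k * (cmod (f k))\<^sup>2) summable_on Zd d" using f by (simp add: wl2_def)
  have le: "(cmod (f k))\<^sup>2 \<le> w k * (cmod (f k))\<^sup>2" for k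
    using w1 by (metis mult_le_cancel_right1 zero_le_power2 order.trans mult_right_mono mult_1)
  show s2: "(\<lambda>k. (cmod (f k))\<^sup>2) summable_on Zd d"
    by (rule summable_on_comparison_test[OF s]) (use le in auto)
  show "(\<Sum>\<^sub>\<infinity>k\<in>Zd d. (cmod (f k))\<^sup>2) \<le> (\<Sum>\<^sub>\<infinity>k\<in>Zd d. w k * (cmod (f k))\<^sup>2)"
    by (rule infsum_mono[OF s2 s]) (use le in auto)
qed

lemma wnorm_le1:
  assumes "wnorm w d f \<le> 1" "\<forall>k. 0 \<le> w k"
  shows "(\<Sum>\<^sub>\<infinity>k\<in>Zd d. w k * (cmod (f k))\<^sup>2) \<le> 1"
proof -
  have "0 \<le> (\<Sum>\<^sub>\<infinity>k\<in>Zd d. w k * (cmod (f k))\<^sup>2)" using assms by (intro infsum_nonneg) auto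
  thus ?thesis using assms(1) unfolding wnorm_def by (metis real_sqrt_le_1_iff)
qed

lemma bounded_err:
  assumes w1: "\<forall>k. 1 \<le> w k" and A: "fin_rank_op w d n A"
  shows "\<exists>B. \<forall>f\<in>wl2 w d. wnorm w d f \<le> 1 \<longrightarrow>
     (\<lambda>k. (cmod (f k - A f k))\<^sup>2) summable_on Zd d \<and> L2norm d (\<lambda>k. f k - A f k) \<le> B"
proof -
  obtain C where C: "\<forall>f\<in>wl2 w d. L2norm d (A f) \<le> C * wnorm w d f"
    using A unfolding fin_rank_op_def by blast
  define C0 where "C0 = max C 0"
  have w0: "\<forall>k. 0 \<le> w k" using w1 by (meson order.trans zero_le_one)
  have "(\<lambda>k. (cmod (f k - A f k))\<^sup>2) summable_on Zd d \<and> L2norm d (\<lambda>k. f k - A f k) \<le> sqrt (2 + 2 * C0\<^sup>2)"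
    if f: "f \<in> wl2 w d" and f1: "wnorm w d f \<le> 1" for f
  proof -
    have Af: "A f \<in> wl2 (\<lambda>_. 1) d" using A f unfolding fin_rank_op_def by blast
    have sAf: "(\<lambda>k. (cmod (A f k))\<^sup>2) summable_on Zd d" using Af by (simp add: wl2_def)
    have sf: "(\<lambda>k. (cmod (f k))\<^sup>2) summable_on Zd d" using wl2_L2[OF w1 f] by simp
    have wn0: "0 \<le> wnorm w d f" unfolding wnorm_def
      by (intro real_sqrt_ge_zero infsum_nonneg) (use w0 in auto)
    have "L2norm d (A f) \<le> C0"
    proof -
      have "L2norm d (A f) \<le> C * wnorm w d f" using C f by blast
      also have "\<dots> \<le> C0 * wnorm w d f" using wn0 by (simp add: C0_def mult_right_mono)
      also have "\<dots> \<le> C0" using wn0 f1 by (simp add: C0_def mult_left_le)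
      finally show ?thesis .
    qed
    hence sq: "sqrt (\<Sum>\<^sub>\<infinity>k\<in>Zd d. (cmod (A f k))\<^sup>2) \<le> C0"
      unfolding L2norm_def wnorm_def by simp
    have X0: "0 \<le> (\<Sum>\<^sub>\<infinity>k\<in>Zd d. (cmod (A f k))\<^sup>2)" by (intro infsum_nonneg) auto
    have "(sqrt (\<Sum>\<^sub>\<infinity>k\<in>Zd d. (cmod (A f k))\<^sup>2))\<^sup>2 \<le> C0\<^sup>2"
      by (rule power_mono[OF sq]) (simp add: X0)
    hence iAf: "(\<Sum>\<^sub>\<infinity>k\<in>Zd d. (cmod (A f k))\<^sup>2) \<le> C0\<^sup>2" using X0 by simp
    have if1: "(\<Sum>\<^sub>\<infinity>k\<in>Zd d. (cmod (f k))\<^sup>2) \<le> 1"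
      using wl2_L2(2)[OF w1 f] wnorm_le1[OF f1 w0] by linarith
    have sum2: "(\<lambda>k. 2 * (cmod (f k))\<^sup>2 + 2 * (cmod (A f k))\<^sup>2) summable_on Zd d"
      by (intro summable_on_add summable_on_cmult_right sf sAf)
    have sd: "(\<lambda>k. (cmod (f k - A f k))\<^sup>2) summable_on Zd d"
      by (rule summable_on_comparison_test[OF sum2]) (auto simp: cmod_diff_sq)
    have "(\<Sum>\<^sub>\<infinity>k\<in>Zd d. (cmod (f k - A f k))\<^sup>2) \<le> (\<Sum>\<^sub>\<infinity>k\<in>Zd d. 2 * (cmod (f k))\<^sup>2 + 2 * (cmod (A f k))\<^sup>2)"
      by (rule infsum_mono[OF sd sum2]) (auto simp: cmod_diff_sq)
    also have "\<dots> = 2 * (\<Sum>\<^sub>\<infinity>k\<in>Zd d. (cmod (f k))\<^sup>2) + 2 * (\<Sum>\<^sub>\<infinity>k\<in>Zd d. (cmod (A f k))\<^sup>2)"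
      by (simp add: infsum_add summable_on_cmult_right sf sAf infsum_cmult_right)
    also have "\<dots> \<le> 2 + 2 * C0\<^sup>2" using if1 iAf by linarith
    finally show ?thesis using sd unfolding L2norm_def wnorm_def by simp
  qed
  thus ?thesis by blast
qed

lemma L2norm_nonneg: "0 \<le> L2norm d f"
  unfolding L2norm_def wnorm_def by (intro real_sqrt_ge_zero infsum_nonneg) auto

lemma zero_wl2: "(\<lambda>k. 0) \<in> wl2 w d"
  unfolding wl2_def by simp

lemma wnorm_zero: "wnorm w d (\<lambda>k. 0) = 0"
  unfolding wnorm_def by simp

lemma zero_op: "1 \<le> n \<Longrightarrow> fin_rank_op w d n (\<lambda>f k. 0)"
  unfolding fin_rank_op_def
  by (auto simp: zero_wl2 L2norm_def wnorm_zero intro!: exI[of _ 0] exI[of _ "\<lambda>_. 0"])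

lemma supp_wl2:
  assumes "finite S" "S \<subseteq> Zd d" "\<forall>k. k \<notin> S \<longrightarrow> f k = 0"
  shows "f \<in> wl2 w d"
  unfolding wl2_def using assms
  by (auto intro!: fin_supp_summable(1)[of S])

lemma sup_props:
  assumes w1: "\<forall>k. 1 \<le> w k" and A: "fin_rank_op w d n A"
  defines "X \<equiv> (\<lambda>f. L2norm d (\<lambda>k. f k - A f k)) ` {f \<in> wl2 w d. wnorm w d f \<le> 1}"
  shows "X \<noteq> {}" "bdd_above X" "0 \<le> Sup X"
proof -
  show ne: "X \<noteq> {}" unfolding X_def using zero_wl2[of w d] wnorm_zero[of w d] by auto
  obtain B where B: "\<forall>f\<in>wl2 w d. wnorm w d f \<le> 1 \<longrightarrow> L2norm d (\<lambda>k. f k - A f k) \<le> B"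
    using bounded_err[OF w1 A] by blast
  show bdd: "bdd_above X" unfolding X_def bdd_above_def using B by auto
  obtain x where "x \<in> X" using ne by blast
  moreover have "0 \<le> x" using \<open>x \<in> X\<close> unfolding X_def by (auto simp: L2norm_nonneg)
  ultimately show "0 \<le> Sup X" using cSup_upper[OF _ bdd] by (meson order.trans)
qed

definition Sset :: "(idx \<Rightarrow> real) \<Rightarrow> nat \<Rightarrow> real \<Rightarrow> idx set" where
  "Sset w d \<epsilon> = {k \<in> Zd d. \<epsilon>\<^sup>2 < inverse (w k)}"

lemma approx_upper:
  assumes w1: "\<forall>k. 1 \<le> w k" and fin: "finite (Sset w d \<epsilon>)" and eps: "0 < \<epsilon>"
  shows "approx_num w d (card (Sset w d \<epsilon>) + 1) \<le> \<epsilon>"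
proof -
  define S where "S = Sset w d \<epsilon>"
  define N where "N = card S"
  have finS: "finite S" using fin S_def by simp
  have SZ: "S \<subseteq> Zd d" unfolding S_def Sset_def by auto
  have w0: "\<forall>k. 0 \<le> w k" using w1 by (meson order.trans zero_le_one)
  obtain h where h: "bij_betw h {0..<N} S" using ex_bij_betw_nat_finite[OF finS] N_def by blast
  define P where "P = (\<lambda>(f::coef) k. if k \<in> S then f k else (0::complex))"
  have Psupp: "\<forall>k. k \<notin> S \<longrightarrow> P f k = 0" for f unfolding P_def by auto
  have PA: "fin_rank_op w d (N + 1) P"
    unfolding fin_rank_op_def
  proof (intro conjI ballI allI exI)
    fix f assume f: "f \<in> wl2 w d"
    show "P f \<in> wl2 (\<lambda>_. 1) d" by (rule supp_wl2[OF finS SZ]) (use Psupp in auto)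
  next
    fix f g show "P (\<lambda>k. f k + g k) = (\<lambda>k. P f k + P g k)" by (auto simp: P_def fun_eq_iff)
  next
    fix c f show "P (\<lambda>k. c * f k) = (\<lambda>k. c * P f k)" by (auto simp: P_def fun_eq_iff)
  next
    fix f assume f: "f \<in> wl2 w d"
    have s1: "(\<lambda>k. 1 * (cmod (P f k))\<^sup>2) summable_on Zd d"
      by (rule fin_supp_summable(1)[OF finS]) (auto simp: P_def)
    have s2: "(\<lambda>k. w k * (cmod (f k))\<^sup>2) summable_on Zd d" using f by (simp add: wl2_def)
    have le: "1 * (cmod (P f k))\<^sup>2 \<le> w k * (cmod (f k))\<^sup>2" for k
    proof -
      have "(cmod (f k))\<^sup>2 \<le> w k * (cmod (f k))\<^sup>2"
        using w1 by (metis mult_le_cancel_right1 zero_le_power2 order.trans mult_right_mono mult_1)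
      thus ?thesis using w0 by (auto simp: P_def)
    qed
    have "(\<Sum>\<^sub>\<infinity>k\<in>Zd d. 1 * (cmod (P f k))\<^sup>2) \<le> (\<Sum>\<^sub>\<infinity>k\<in>Zd d. w k * (cmod (f k))\<^sup>2)"
      by (rule infsum_mono[OF s1 s2 le])
    thus "L2norm d (P f) \<le> 1 * wnorm w d f"
      unfolding L2norm_def wnorm_def by (simp add: real_sqrt_le_mono)
  next
    show "1 \<le> N + 1" by simp
  next
    fix f assume f: "f \<in> wl2 w d"
    show "P f = (\<lambda>k. \<Sum>i<N + 1 - 1. (\<lambda>i. f (h i)) i * (\<lambda>i. ev (h i)) i k)"
    proof
      fix k
      have "(\<Sum>i<N + 1 - 1. f (h i) * ev (h i) k) = (\<Sum>i\<in>{0..<N}. (\<lambda>s. f s * ev s k) (h i))"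
        by (simp add: lessThan_atLeast0)
      also have "\<dots> = (\<Sum>s\<in>S. f s * ev s k)" by (rule sum.reindex_bij_betw[OF h])
      also have "\<dots> = (\<Sum>s\<in>S. if s = k then f s else 0)" by (rule sum.cong) (auto simp: ev_def)
      also have "\<dots> = P f k" using finS by (simp add: P_def)
      finally show "P f k = (\<Sum>i<N + 1 - 1. (\<lambda>i. f (h i)) i * (\<lambda>i. ev (h i)) i k)" by simp
    qed
  qed
  define X where "X = (\<lambda>f. L2norm d (\<lambda>k. f k - P f k)) ` {f \<in> wl2 w d. wnorm w d f \<le> 1}"
  have err: "L2norm d (\<lambda>k. f k - P f k) \<le> \<epsilon>" if f: "f \<in> wl2 w d" and f1: "wnorm w d f \<le> 1" for f
  proof -
    have s2: "(\<lambda>k. w k * (cmod (f k))\<^sup>2) summable_on Zd d" using f by (simp add: wl2_def)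
    have s3: "(\<lambda>k. \<epsilon>\<^sup>2 * (w k * (cmod (f k))\<^sup>2)) summable_on Zd d"
      by (rule summable_on_cmult_right[OF s2])
    have le: "1 * (cmod (f k - P f k))\<^sup>2 \<le> \<epsilon>\<^sup>2 * (w k * (cmod (f k))\<^sup>2)" if k: "k \<in> Zd d" for k
    proof (cases "k \<in> S")
      case True thus ?thesis using w0 by (simp add: P_def)
    next
      case False
      hence "inverse (w k) \<le> \<epsilon>\<^sup>2" using k unfolding S_def Sset_def by auto
      hence "inverse (w k) * (w k * (cmod (f k))\<^sup>2) \<le> \<epsilon>\<^sup>2 * (w k * (cmod (f k))\<^sup>2)"
        by (rule mult_right_mono) (use w0 in simp)
      moreover have "inverse (w k) * (w k * (cmod (f k))\<^sup>2) = (cmod (f k))\<^sup>2"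
        using w1 by (metis inverse_inverse_eq left_inverse mult.assoc mult_1 not_one_le_zero)
      ultimately show ?thesis using False by (simp add: P_def)
    qed
    have s1: "(\<lambda>k. 1 * (cmod (f k - P f k))\<^sup>2) summable_on Zd d"
      by (rule summable_on_comparison_test[OF s3]) (use le in auto)
    have "(\<Sum>\<^sub>\<infinity>k\<in>Zd d. 1 * (cmod (f k - P f k))\<^sup>2) \<le> (\<Sum>\<^sub>\<infinity>k\<in>Zd d. \<epsilon>\<^sup>2 * (w k * (cmod (f k))\<^sup>2))"
      by (rule infsum_mono[OF s1 s3 le])
    also have "\<dots> = \<epsilon>\<^sup>2 * (\<Sum>\<^sub>\<infinity>k\<in>Zd d. w k * (cmod (f k))\<^sup>2)" by (rule infsum_cmult_right')
    also have "\<dots> \<le> \<epsilon>\<^sup>2 * 1" using wnorm_le1[OF f1 w0] by (intro mult_left_mono) auto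
    finally have "sqrt (\<Sum>\<^sub>\<infinity>k\<in>Zd d. 1 * (cmod (f k - P f k))\<^sup>2) \<le> sqrt (\<epsilon>\<^sup>2)"
      by (intro real_sqrt_le_mono) simp
    thus ?thesis using eps unfolding L2norm_def wnorm_def by simp
  qed
  have "Sup X \<le> \<epsilon>"
    using sup_props(1)[OF w1 PA] err unfolding X_def by (intro cSup_least) auto
  moreover have "approx_num w d (N + 1) \<le> Sup X"
    unfolding approx_num_def X_def
  proof (rule cInf_lower)
    show "Sup ((\<lambda>f. L2norm d (\<lambda>k. f k - P f k)) ` {f \<in> wl2 w d. wnorm w d f \<le> 1})
      \<in> (\<lambda>A. Sup ((\<lambda>f. L2norm d (\<lambda>k. f k - A f k)) ` {f \<in> wl2 w d. wnorm w d f \<le> 1})) ` {A. fin_rank_op w d (N + 1) A}"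
      using PA by blast
    show "bdd_below ((\<lambda>A. Sup ((\<lambda>f. L2norm d (\<lambda>k. f k - A f k)) ` {f \<in> wl2 w d. wnorm w d f \<le> 1})) ` {A. fin_rank_op w d (N + 1) A})"
      unfolding bdd_below_def using sup_props(3)[OF w1] by blast
  qed
  ultimately show ?thesis unfolding N_def S_def by simp
qed

lemma approx_lower:
  assumes w1: "\<forall>k. 1 \<le> w k" and fin: "finite (Sset w d \<epsilon>)" and nS: "n < card (Sset w d \<epsilon>)"
  shows "\<epsilon> < approx_num w d (n + 1)"
proof -
  define S where "S = Sset w d \<epsilon>"
  have finS: "finite S" using fin S_def by simp
  have SZ: "S \<subseteq> Zd d" unfolding S_def Sset_def by auto
  have w0: "\<forall>k. 0 \<le> w k" using w1 by (meson order.trans zero_le_one)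
  have Sne: "S \<noteq> {}" using nS S_def by auto
  define m where "m = Min ((\<lambda>k. inverse (w k)) ` S)"
  have m_le: "m \<le> inverse (w k)" if "k \<in> S" for k
    unfolding m_def using finS that by (intro Min_le) auto
  have "m \<in> (\<lambda>k. inverse (w k)) ` S" unfolding m_def using finS Sne by (intro Min_in) auto
  hence m_gt: "\<epsilon>\<^sup>2 < m" unfolding S_def Sset_def by auto
  have eps_m: "\<epsilon> < sqrt m" by (rule real_less_rsqrt[OF m_gt])
  have key: "sqrt m \<le> Sup ((\<lambda>f. L2norm d (\<lambda>k. f k - A f k)) ` {f \<in> wl2 w d. wnorm w d f \<le> 1})"
    if A: "fin_rank_op w d (n + 1) A" for A
  proof -
    obtain g where g: "\<forall>f\<in>wl2 w d. \<exists>c. A f = (\<lambda>k. \<Sum>i<n + 1 - 1. c i * g i k)"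
      using A unfolding fin_rank_op_def by blast
    have Aadd: "\<forall>f\<in>wl2 w d. \<forall>h\<in>wl2 w d. A (\<lambda>k. f k + h k) = (\<lambda>k. A f k + A h k)"
      using A unfolding fin_rank_op_def by blast
    have Ahom: "\<forall>c. \<forall>f\<in>wl2 w d. A (\<lambda>k. c * f k) = (\<lambda>k. c * A f k)"
      using A unfolding fin_rank_op_def by blast
    have inV: "f \<in> wl2 w d" if "\<forall>k. k \<notin> S \<longrightarrow> f k = 0" for f
      by (rule supp_wl2[OF finS SZ that])
    define T where "T = (\<lambda>f k. if k \<in> S then A f k else 0)"
    obtain f0 where f0: "\<forall>k. k \<notin> S \<longrightarrow> f0 k = 0" "f0 \<noteq> 0" "T f0 = 0"
    proof (rule exE[OF kernel_exists[of S n T "\<lambda>i k. if k \<in> S then g i k else 0"]])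
      show "finite S" by (rule finS)
      show "n < card S" using nS S_def by simp
    next
      fix f h :: coef
      assume f: "\<forall>k. k \<notin> S \<longrightarrow> f k = 0" and h: "\<forall>k. k \<notin> S \<longrightarrow> h k = 0"
      have "A (f + h) = (\<lambda>k. A f k + A h k)"
        using Aadd inV[OF f] inV[OF h] unfolding plus_fun_def by blast
      thus "T (f + h) = T f + T h" by (auto simp: T_def fun_eq_iff)
    next
      fix c f assume f: "\<forall>k. k \<notin> S \<longrightarrow> (f::coef) k = 0"
      have "A (sc c f) = (\<lambda>k. c * A f k)"
        using Ahom inV[OF f] unfolding sc_def by blast
      thus "T (sc c f) = sc c (T f)" by (auto simp: T_def sc_def fun_eq_iff)
    next
      fix f assume f: "\<forall>k. k \<notin> S \<longrightarrow> (f::coef) k = 0"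
      obtain c where c: "A f = (\<lambda>k. \<Sum>i<n + 1 - 1. c i * g i k)" using g inV[OF f] by blast
      show "\<exists>c. T f = (\<lambda>k. \<Sum>i<n. c i * (if k \<in> S then g i k else 0))"
        by (rule exI[of _ c]) (auto simp: T_def c fun_eq_iff)
    next
      fix f assume "(\<forall>k. k \<notin> S \<longrightarrow> f k = 0) \<and> f \<noteq> 0 \<and> T f = 0"
      thus thesis using that by blast
    qed
    obtain k0 where k0: "f0 k0 \<noteq> 0" using f0(2) by (auto simp: fun_eq_iff)
    have k0S: "k0 \<in> S" using k0 f0(1) by blast
    define r where "r = (\<Sum>k\<in>S. w k * (cmod (f0 k))\<^sup>2)"
    have wpos: "0 < w k0" using w1 by (meson less_le_trans zero_less_one)
    have r: "0 < r" unfolding r_def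
      by (rule sum_pos2[OF finS k0S]) (use wpos w0 k0 in \<open>auto intro!: mult_pos_pos\<close>)
    define c where "c = complex_of_real (inverse (sqrt r))"
    have cc: "(cmod c)\<^sup>2 = inverse r"
    proof -
      have "cmod c = inverse (sqrt r)" unfolding c_def using r by (simp only: norm_of_real) simp
      thus ?thesis using r by (simp add: power_inverse)
    qed
    define f where "f = (\<lambda>k. c * f0 k)"
    have fsupp: "\<forall>k. k \<notin> S \<longrightarrow> f k = 0" using f0(1) by (simp add: f_def)
    have fV: "f \<in> wl2 w d" by (rule inV[OF fsupp])
    have wsum: "(\<Sum>\<^sub>\<infinity>k\<in>Zd d. w k * (cmod (f k))\<^sup>2) = (\<Sum>k\<in>S. w k * (cmod (f k))\<^sup>2)"
      using fin_supp_summable(2)[OF finS, of "\<lambda>k. w k * (cmod (f k))\<^sup>2" "Zd d"] fsupp SZ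
      by (simp add: Int_absorb2)
    have "(\<Sum>k\<in>S. w k * (cmod (f k))\<^sup>2) = (\<Sum>k\<in>S. w k * (cmod (f0 k))\<^sup>2) / r"
      unfolding f_def sum_divide_distrib
      using r by (intro sum.cong) (auto simp: norm_mult power_mult_distrib cc field_simps)
    also have "\<dots> = 1" using r r_def by simp
    finally have w1f: "(\<Sum>k\<in>S. w k * (cmod (f k))\<^sup>2) = 1" .
    have fn: "wnorm w d f \<le> 1" unfolding wnorm_def wsum w1f by simp
    have Af: "A f k = 0" if "k \<in> S" for k
    proof -
      have "A f = (\<lambda>k. c * A f0 k)" unfolding f_def using Ahom inV[OF f0(1)] by blast
      moreover have "A f0 k = 0" using f0(3) that unfolding T_def by (metis (mono_tags) zero_fun_def)
      ultimately show ?thesis by simp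
    qed
    obtain B where B: "\<forall>f\<in>wl2 w d. wnorm w d f \<le> 1 \<longrightarrow>
      (\<lambda>k. (cmod (f k - A f k))\<^sup>2) summable_on Zd d \<and> L2norm d (\<lambda>k. f k - A f k) \<le> B"
      using bounded_err[OF w1 A] by blast
    have sd: "(\<lambda>k. 1 * (cmod (f k - A f k))\<^sup>2) summable_on Zd d" using B fV fn by simp
    have "m * 1 = (\<Sum>k\<in>S. m * (w k * (cmod (f k))\<^sup>2))" by (simp only: w1f[symmetric] sum_distrib_left)
    also have "\<dots> \<le> (\<Sum>k\<in>S. 1 * (cmod (f k - A f k))\<^sup>2)"
    proof (rule sum_mono)
      fix k assume kS: "k \<in> S"
      have "m * (w k * (cmod (f k))\<^sup>2) \<le> inverse (w k) * (w k * (cmod (f k))\<^sup>2)"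
        by (rule mult_right_mono[OF m_le[OF kS]]) (use w0 in simp)
      also have "\<dots> = (cmod (f k))\<^sup>2"
        using w1 by (metis inverse_inverse_eq left_inverse mult.assoc mult_1 not_one_le_zero)
      finally show "m * (w k * (cmod (f k))\<^sup>2) \<le> 1 * (cmod (f k - A f k))\<^sup>2" using Af[OF kS] by simp
    qed
    also have "\<dots> \<le> (\<Sum>\<^sub>\<infinity>k\<in>Zd d. 1 * (cmod (f k - A f k))\<^sup>2)"
      by (rule finite_sum_le_infsum[OF sd finS SZ]) simp
    finally have "sqrt m \<le> L2norm d (\<lambda>k. f k - A f k)"
      unfolding L2norm_def wnorm_def by (simp add: real_sqrt_le_mono)
    also have "\<dots> \<le> Sup ((\<lambda>f. L2norm d (\<lambda>k. f k - A f k)) ` {f \<in> wl2 w d. wnorm w d f \<le> 1})"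
      by (rule cSup_upper) (use fV fn sup_props(2)[OF w1 A] in auto)
    finally show ?thesis .
  qed
  have "sqrt m \<le> approx_num w d (n + 1)"
    unfolding approx_num_def
    by (rule cInf_greatest) (use zero_op[of "n+1" w d] key in auto)
  thus ?thesis using eps_m by linarith
qed

lemma info_char:
  assumes w1: "\<forall>k. 1 \<le> w k" and fin: "finite (Sset w d \<epsilon>)" and eps: "0 < \<epsilon>"
  shows "info_compl w d \<epsilon> = card (Sset w d \<epsilon>)"
  unfolding info_compl_def
proof (rule Least_equality)
  show "approx_num w d (card (Sset w d \<epsilon>) + 1) \<le> \<epsilon>" by (rule approx_upper[OF w1 fin eps])
  fix n assume "approx_num w d (n + 1) \<le> \<epsilon>"
  thus "card (Sset w d \<epsilon>) \<le> n" using approx_lower[OF w1 fin, of n] by fastforce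
qed

definition sfun :: "(nat \<Rightarrow> real) \<Rightarrow> (nat \<Rightarrow> real) \<Rightarrow> nat \<Rightarrow> idx \<Rightarrow> real" where
  "sfun a b d k = (\<Sum>j=1..d. a j * \<bar>real_of_int (k j)\<bar> powr (2 * b j))"

lemma term_nonneg: "\<forall>j\<ge>1. 0 < a j \<Longrightarrow> 1 \<le> j \<Longrightarrow> 0 \<le> a j * \<bar>x\<bar> powr (y::real)"
  by (simp add: less_imp_le)

lemma sfun_nonneg: "\<forall>j\<ge>1. 0 < a j \<Longrightarrow> 0 \<le> sfun a b d k"
  unfolding sfun_def by (intro sum_nonneg mult_nonneg_nonneg) (simp_all add: less_imp_le)

lemma fin_s:
  assumes a: "\<forall>j\<ge>1. 0 < a j" and b: "\<forall>j\<ge>1. 0 < b j"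
  shows "finite {k \<in> Zd d. sfun a b d k < L}"
proof -
  define Bj where "Bj j = (L / a j) powr (1 / (2 * b j))" for j
  define M where "M = \<lceil>\<Sum>j=1..d. Bj j\<rceil>"
  have "{k \<in> Zd d. sfun a b d k < L} \<subseteq> {k. \<forall>j. (j \<in> {1..d} \<longrightarrow> k j \<in> {-M..M}) \<and> (j \<notin> {1..d} \<longrightarrow> k j = 0)}"
  proof (safe)
    fix k j assume kZ: "k \<in> Zd d" and sk: "sfun a b d k < L"
    { assume "j \<notin> {1..d}" thus "k j = 0" using kZ unfolding Zd_def by (cases "j = 0") auto }
    assume j: "j \<in> {1..d}"
    have aj: "0 < a j" and bj: "0 < b j" using a b j by auto
    have "a j * \<bar>real_of_int (k j)\<bar> powr (2 * b j) \<le> sfun a b d k"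
      unfolding sfun_def
      by (rule member_le_sum[OF j]) (auto intro!: term_nonneg[OF a])
    hence "\<bar>real_of_int (k j)\<bar> powr (2 * b j) * a j < L" using sk by (simp add: mult.commute)
    hence lt: "\<bar>real_of_int (k j)\<bar> powr (2 * b j) < L / a j" using aj by (simp add: pos_less_divide_eq)
    have "\<bar>real_of_int (k j)\<bar> = (\<bar>real_of_int (k j)\<bar> powr (2 * b j)) powr (1 / (2 * b j))"
      using bj by (simp add: powr_powr)
    also have "\<dots> < Bj j" unfolding Bj_def
      by (rule powr_less_mono2[OF _ _ lt]) (use bj in auto)
    also have "\<dots> \<le> (\<Sum>j=1..d. Bj j)" using j by (intro member_le_sum) (auto simp: Bj_def)
    also have "\<dots> \<le> of_int M" unfolding M_def by simp
    finally have "\<bar>k j\<bar> \<le> M" by linarith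
    thus "k j \<in> {-M..M}" by auto
  qed
  moreover have "finite {k. \<forall>j. (j \<in> {1..d} \<longrightarrow> k j \<in> {-M..M}) \<and> (j \<notin> {1..d} \<longrightarrow> k j = 0)}"
    by (rule finite_set_of_finite_funs) auto
  ultimately show ?thesis by (rule finite_subset)
qed

lemma sob_eq: "sob_weight a b d k = 1 + sfun a b d k"
  unfolding sob_weight_def sfun_def by simp

lemma kor_eq: "kor_weight a b \<omega> d k = inverse (\<omega> powr sfun a b d k)"
  unfolding kor_weight_def omega_k_def sfun_def by simp

lemma sob_ge1: "\<forall>j\<ge>1. 0 < a j \<Longrightarrow> \<forall>k. 1 \<le> sob_weight a b d k"
  using sfun_nonneg by (simp add: sob_eq)

lemma kor_ge1:
  assumes "\<forall>j\<ge>1. 0 < a j" "0 < \<omega>" "\<omega> < 1"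
  shows "\<forall>k. 1 \<le> kor_weight a b \<omega> d k"
proof
  fix k
  have s0: "0 \<le> sfun a b d k" using sfun_nonneg assms(1) by blast
  have "\<omega> powr sfun a b d k = exp (sfun a b d k * ln \<omega>)" using assms by (simp add: powr_def)
  also have "\<dots> \<le> 1" using s0 assms by (simp add: mult_nonneg_nonpos)
  finally have "\<omega> powr sfun a b d k \<le> 1" .
  moreover have "0 < \<omega> powr sfun a b d k" using assms by simp
  ultimately show "1 \<le> kor_weight a b \<omega> d k" by (simp add: kor_eq one_le_inverse)
qed

lemma sq_exp: assumes "0 < (x::real)" shows "x\<^sup>2 = exp (2 * ln x)"
proof -
  have "exp (2 * ln x) = exp (ln x + ln x)" by simp
  also have "\<dots> = exp (ln x) * exp (ln x)" by (rule exp_add)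
  also have "\<dots> = x * x" using assms by simp
  finally show ?thesis by (simp add: power2_eq_square)
qed

lemma Sset_kor:
  assumes a: "\<forall>j\<ge>1. 0 < a j" and w: "0 < \<omega>" "\<omega> < 1" and dl: "0 < \<delta>"
  shows "Sset (kor_weight a b \<omega> d) d \<delta> = {k \<in> Zd d. sfun a b d k < 2 * ln \<delta> / ln \<omega>}"
proof -
  have lw: "ln \<omega> < 0" using w by simp
  have "\<delta>\<^sup>2 < inverse (kor_weight a b \<omega> d k) \<longleftrightarrow> sfun a b d k < 2 * ln \<delta> / ln \<omega>" for k
  proof -
    have "inverse (kor_weight a b \<omega> d k) = exp (sfun a b d k * ln \<omega>)"
      using w by (simp add: kor_eq powr_def)
    moreover have "\<delta>\<^sup>2 = exp (2 * ln \<delta>)" by (rule sq_exp[OF dl])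
    ultimately have "\<delta>\<^sup>2 < inverse (kor_weight a b \<omega> d k) \<longleftrightarrow> 2 * ln \<delta> < sfun a b d k * ln \<omega>"
      by simp
    also have "\<dots> \<longleftrightarrow> sfun a b d k < 2 * ln \<delta> / ln \<omega>" using lw by (simp add: neg_less_divide_eq)
    finally show ?thesis .
  qed
  thus ?thesis unfolding Sset_def by auto
qed

lemma Sset_sob:
  assumes a: "\<forall>j\<ge>1. 0 < a j" and dl: "0 < \<delta>"
  shows "Sset (sob_weight a b d) d \<delta> = {k \<in> Zd d. sfun a b d k < inverse (\<delta>\<^sup>2) - 1}"
proof -
  have "\<delta>\<^sup>2 < inverse (sob_weight a b d k) \<longleftrightarrow> sfun a b d k < inverse (\<delta>\<^sup>2) - 1" for k
  proof -
    have s0: "0 \<le> sfun a b d k" by (rule sfun_nonneg[OF a])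
    have d2: "0 < \<delta>\<^sup>2" using dl by simp
    have "\<delta>\<^sup>2 < inverse (1 + sfun a b d k) \<longleftrightarrow> 1 + sfun a b d k < inverse (\<delta>\<^sup>2)"
      using s0 d2 by (metis add_pos_nonneg inverse_less_iff_less inverse_inverse_eq zero_less_one positive_imp_inverse_positive)
    thus ?thesis unfolding sob_eq by linarith
  qed
  thus ?thesis unfolding Sset_def by auto
qed

theorem theorem2p7:
  fixes a b :: "nat \<Rightarrow> real" and \<omega> \<epsilon> :: real and d :: nat
  assumes "\<forall>j\<ge>1. 0 < a j" and "\<forall>j\<ge>1. a j \<le> a (Suc j)"
    and "\<forall>j\<ge>1. 0 < b j" and "(INF j\<in>{1..}. b j) > 0"
    and "0 < \<omega>" and "\<omega> < 1"
    and "0 < \<epsilon>" and "\<epsilon> < 1"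
    and "1 \<le> d"
  shows "n_APP a b \<omega> d \<epsilon> =
           n_I a b d ((ln (\<epsilon> powr (-2)) / ln (inverse \<omega>) + 1) powr (-1/2))
         \<and> n_I a b d \<epsilon> = n_APP a b \<omega> d (\<omega> powr ((\<epsilon> powr (-2) - 1) / 2))"
proof -
  note a = assms(1) and b = assms(3) and w = assms(5,6) and e = assms(7,8)
  have kw1: "\<forall>k. 1 \<le> kor_weight a b \<omega> d k" by (rule kor_ge1[OF a w])
  have sw1: "\<forall>k. 1 \<le> sob_weight a b d k" by (rule sob_ge1[OF a])
  define L where "L = ln (\<epsilon> powr (-2)) / ln (inverse \<omega>)"
  have lw: "ln \<omega> < 0" using w by simp
  have le: "ln \<epsilon> < 0" using e by simp
  have L_eq: "L = 2 * ln \<epsilon> / ln \<omega>" unfolding L_def using w e by (simp add: ln_inverse)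
  have L0: "0 < L" unfolding L_eq using lw le by (simp add: divide_neg_neg)
  define d1 where "d1 = (L + 1) powr (-1/2)"
  have d1p: "0 < d1" unfolding d1_def using L0 by simp
  have "d1\<^sup>2 = d1 powr 2" using d1p by simp
  also have "\<dots> = (L + 1) powr (-1)" unfolding d1_def using L0 by (simp add: powr_powr)
  also have "\<dots> = inverse (L + 1)" using L0 by (simp add: powr_minus)
  finally have d1sq: "inverse (d1\<^sup>2) - 1 = L" by simp
  have S1: "Sset (kor_weight a b \<omega> d) d \<epsilon> = Sset (sob_weight a b d) d d1"
    using Sset_kor[OF a w e(1)] Sset_sob[OF a d1p] d1sq L_eq by simp
  have F1: "finite (Sset (kor_weight a b \<omega> d) d \<epsilon>)"
    using Sset_kor[OF a w e(1)] fin_s[OF a b] by simp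
  have part1: "n_APP a b \<omega> d \<epsilon> = n_I a b d d1"
    unfolding n_APP_def n_I_def
    using info_char[OF kw1 F1 e(1)] info_char[OF sw1 _ d1p] S1 F1 by simp
  define E where "E = \<epsilon> powr (-2) - 1"
  have E_eq: "E = inverse (\<epsilon>\<^sup>2) - 1" unfolding E_def using e by (simp add: powr_minus)
  define d2 where "d2 = \<omega> powr (E / 2)"
  have d2p: "0 < d2" unfolding d2_def using w by simp
  have d2e: "2 * ln d2 / ln \<omega> = E" unfolding d2_def using lw by simp
  have S2: "Sset (sob_weight a b d) d \<epsilon> = Sset (kor_weight a b \<omega> d) d d2"
    using Sset_kor[OF a w d2p] Sset_sob[OF a e(1)] d2e E_eq by simp
  have F2: "finite (Sset (sob_weight a b d) d \<epsilon>)"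
    using Sset_sob[OF a e(1)] fin_s[OF a b] by simp
  have part2: "n_I a b d \<epsilon> = n_APP a b \<omega> d d2"
    unfolding n_APP_def n_I_def
    using info_char[OF sw1 F2 e(1)] info_char[OF kw1 _ d2p] S2 F2 by simp
  show ?thesis using part1 part2 unfolding d1_def d2_def E_def L_def by (intro conjI)
qed

end
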